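(* Let $(\mathsf{E},\mathcal{F},\mu)$ be a probability space and let $P_{1}$ and $(P_{2,\iota})_{\iota>0}$ be $\mu$-invariant Markov kernels. Let $\Phi:\mathrm{L}^{2}(\mu)\to[0,\infty]$ with $a:=\sup_{f\in\mathrm{L}_{0}^{2}(\mu)\setminus\{0\}}\|f\|_{2}^{2}/\Phi(f)\in(0,\infty)$ satisfy $\Phi(cf)=c^{2}\Phi(f)$, $\|f-\mu(f)\|_{2}^{2}\le a\Phi(f-\mu(f))$ and non-expansivity $\Phi(T^{n}f)\le\Phi(f)$ for $T\in\{P_{1}\}\cup\{P_{2,\iota}\}_{\iota>0}$. Assume $P_{1}$ satisfies a super-Poincaré inequality with function $\beta_{1}$ and that for every $\iota>0$, \[ \|f\|_{2}^{2}\le s\,\mathcal{E}(P_{2,\iota}^{*}P_{2,\iota},f)+\beta_{2,\iota}(s)\Phi(f)\qquad\forall s>0,\ f\in\mathrm{L}_{0}^{2}(\mu), \] where $\beta_{1},\beta_{2,\iota}:(0,\infty)\to[0,\infty)$ are decreasing and tend to $0$ at $\infty$. For $\beta\in\{\beta_{1},\beta_{2,\iota}\}$ let $K(u)=u\beta(1/u)$, $K(0)=0$, $K^{*}(v)=\sup_{u\ge0}\{uv-K(u)\}$, $F(x)=\int_{x}^{a}\mathrm{d}v/K^{*}(v)$ for $x\in(0,a]$, giving $F_{1}$ and $F_{2,\iota}$, with inverses $F_{1}^{-1},F_{2,\iota}^{-1}:[0,\infty)\to(0,a]$ (so $F^{-1}(0)=a$). Assume that $\beta_{2,\iota}\ge\beta_{1}$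 pointwise for every $\iota>0$ and that $\lim_{\iota\to0}\beta_{2,\iota}(s)=\beta_{1}(s)$ for every $s>0$. Then for every $\iota>0$ and $n\in\mathbb{N}$, $F_{2,\iota}^{-1}(n)\ge F_{1}^{-1}(n)$, and \[ \lim_{\iota\to0}\sup_{n\ge0}\big\{F_{2,\iota}^{-1}(n)-F_{1}^{-1}(n)\big\}=0. \]
   Context: A kernel $P$ satisfies a super-Poincaré inequality with function $\beta$ (decreasing, $\beta(s)\downarrow0$) if $\|f\|_{2}^{2}\le s\,\mathcal{E}(P^{*}P,f)+\beta(s)\Phi(f)$ for all $s>0$, $f\in\mathrm{L}_{0}^{2}(\mu)$. $\mathcal{E}(T,f)=\langle(\mathrm{Id}-T)f,f\rangle$ in $\mathrm{L}^{2}(\mu)$, $P^{*}$ is the adjoint, and $\mathrm{L}_{0}^{2}(\mu)$ is the mean-zero subspace. *)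

theory Defs
  imports "HOL-Probability.Probability"
begin

definition L2 :: "'a measure \<Rightarrow> ('a \<Rightarrow> real) set" where
  "L2 M = {f. f \<in> borel_measurable M \<and> integrable M (\<lambda>x. (f x)\<^sup>2)}"

definition L20 :: "'a measure \<Rightarrow> ('a \<Rightarrow> real) set" where
  "L20 M = {f \<in> L2 M. (\<integral>x. f x \<partial>M) = 0}"

definition sqnorm :: "'a measure \<Rightarrow> ('a \<Rightarrow> real) \<Rightarrow> real" where
  "sqnorm M f = (\<integral>x. (f x)\<^sup>2 \<partial>M)"

definition invariant_markov_kernel :: "'a measure \<Rightarrow> ('a \<Rightarrow> 'a measure) \<Rightarrow> bool" where
  "invariant_markov_kernel M P \<longleftrightarrow> P \<in> M \<rightarrow>\<^sub>M prob_algebra M \<and> M \<bind> P = M"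

definition kapply :: "('a \<Rightarrow> 'a measure) \<Rightarrow> ('a \<Rightarrow> real) \<Rightarrow> 'a \<Rightarrow> real" where
  "kapply P f = (\<lambda>x. \<integral>y. f y \<partial>(P x))"

text \<open>Dirichlet form E(P^*P, f) = <f,f> - <P^*P f, f> = ||f||^2 - ||P f||^2.\<close>
definition dirichlet_PstarP :: "'a measure \<Rightarrow> ('a \<Rightarrow> 'a measure) \<Rightarrow> ('a \<Rightarrow> real) \<Rightarrow> real" where
  "dirichlet_PstarP M P f = sqnorm M f - sqnorm M (kapply P f)"

definition super_poincare ::
  "'a measure \<Rightarrow> ('a \<Rightarrow> 'a measure) \<Rightarrow> (real \<Rightarrow> real) \<Rightarrow> (('a \<Rightarrow> real) \<Rightarrow> ennreal) \<Rightarrow> bool" where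
  "super_poincare M P \<beta> \<Phi> \<longleftrightarrow>
     (\<forall>s>0. \<forall>f\<in>L20 M.
        ennreal (sqnorm M f) \<le> ennreal (s * dirichlet_PstarP M P f) + ennreal (\<beta> s) * \<Phi> f)"

definition admissible_beta :: "(real \<Rightarrow> real) \<Rightarrow> bool" where
  "admissible_beta \<beta> \<longleftrightarrow> (\<forall>s>0. \<beta> s \<ge> 0) \<and> (\<forall>s t. 0 < s \<longrightarrow> s \<le> t \<longrightarrow> \<beta> t \<le> \<beta> s)
     \<and> (\<beta> \<longlongrightarrow> 0) at_top"

definition Kfun :: "(real \<Rightarrow> real) \<Rightarrow> real \<Rightarrow> real" where
  "Kfun \<beta> u = (if u = 0 then 0 else u * \<beta> (1 / u))"

text \<open>Convex conjugate K^*(v) = sup_{u>=0} (u v - K u), valued in [0,inf]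
  (the supremum is >= 0 because of u = 0).\<close>
definition Kstar :: "(real \<Rightarrow> real) \<Rightarrow> real \<Rightarrow> ennreal" where
  "Kstar \<beta> v = (SUP u\<in>{0..}. ennreal (u * v - Kfun \<beta> u))"

definition Ffun :: "(real \<Rightarrow> real) \<Rightarrow> real \<Rightarrow> real \<Rightarrow> ennreal" where
  "Ffun \<beta> a x = (\<integral>\<^sup>+ v \<in> {x..a}. (1 / Kstar \<beta> v) \<partial>lborel)"

definition Finv :: "(real \<Rightarrow> real) \<Rightarrow> real \<Rightarrow> real \<Rightarrow> real" where
  "Finv \<beta> a t = (THE x. x \<in> {0<..a} \<and> Ffun \<beta> a x = ennreal t)"

end

theory Submission
  imports Defs
begin
lemma inv_anti: "(x::ennreal) \<le> y \<Longrightarrow> 1 / y \<le> 1 / x"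
proof (cases x; cases y)
  fix r s assume *: "x = ennreal r" "y = ennreal s" "0 \<le> r" "0 \<le> s" "x \<le> y"
  show ?thesis
  proof (cases "r = 0")
    case False
    then have "r > 0" "s > 0" "r \<le> s" using * by auto
    then show ?thesis using * divide_ennreal[of 1 s] divide_ennreal[of 1 r]
      by (auto simp flip: ennreal_1 intro!: ennreal_leI divide_left_mono)
  qed (use * in auto)
qed (auto simp: top_unique)

lemma Kstar_mono: "v \<le> w \<Longrightarrow> Kstar \<beta> v \<le> Kstar \<beta> w"
  unfolding Kstar_def
  by (rule SUP_subset_mono[OF order_refl]) (auto intro!: ennreal_leI mult_left_mono)

lemma Kstar_beta: "(\<And>s. s > 0 \<Longrightarrow> \<beta> s \<le> \<beta>' s) \<Longrightarrow> Kstar \<beta>' v \<le> Kstar \<beta> v"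
  unfolding Kstar_def Kfun_def
  by (rule SUP_subset_mono[OF order_refl]) (auto intro!: ennreal_leI mult_left_mono)

lemma Kstar_pos:
  assumes "admissible_beta \<beta>" "v > 0"
  shows "0 < Kstar \<beta> v"
proof -
  have "(\<beta> \<longlongrightarrow> 0) at_top" using assms(1) unfolding admissible_beta_def by auto
  then have "\<forall>\<^sub>F s in at_top. \<beta> s < v" using assms(2) by (simp add: order_tendstoD(2))
  then obtain s0 where s0: "\<And>s. s \<ge> s0 \<Longrightarrow> \<beta> s < v" by (auto simp: eventually_at_top_linorder)
  define s where "s = max s0 1"
  have sp: "s > 0" "\<beta> s < v" using s0 by (auto simp: s_def)
  have "0 < (1/s) * v - Kfun \<beta> (1/s)" using sp
    by (auto simp: Kfun_def field_simps)
  then have "0 < ennreal ((1/s) * v - Kfun \<beta> (1/s))" by simp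
  also have "\<dots> \<le> Kstar \<beta> v" unfolding Kstar_def
    by (rule SUP_upper) (use sp in auto)
  finally show ?thesis .
qed

definition good :: "real \<Rightarrow> (real \<Rightarrow> real) \<Rightarrow> bool" where
  "good a \<beta> \<longleftrightarrow> 0 < a \<and> admissible_beta \<beta> \<and> (\<forall>s. 0 < s \<longrightarrow> s < 1 \<longrightarrow> (1 - s) * a \<le> \<beta> s)"

lemma Kstar_le:
  assumes g: "good a \<beta>" and v: "0 \<le> v" "v \<le> a"
  shows "Kstar \<beta> v \<le> ennreal (2 * v)"
  unfolding Kstar_def
proof (rule SUP_least, rule ennreal_leI)
  fix u :: real assume "u \<in> {0..}"
  then have u: "u \<ge> 0" by auto
  have nn: "\<And>s. s > 0 \<Longrightarrow> \<beta> s \<ge> 0" and lb: "\<And>s. 0 < s \<Longrightarrow> s < 1 \<Longrightarrow> (1 - s) * a \<le> \<beta> s"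
    and ap: "a > 0"
    using g unfolding good_def admissible_beta_def by auto
  show "u * v - Kfun \<beta> u \<le> 2 * v"
  proof (cases "u \<le> 2")
    case True
    have "Kfun \<beta> u \<ge> 0" using nn u by (auto simp: Kfun_def)
    moreover have "u * v \<le> 2 * v" using True v by (intro mult_right_mono) auto
    ultimately show ?thesis by linarith
  next
    case False
    then have "(1 - 1/u) * a \<le> \<beta> (1/u)" by (intro lb) auto
    then have "u * ((1 - 1/u) * a) \<le> u * \<beta> (1/u)" using False by (intro mult_left_mono) auto
    then have "u * a - a \<le> Kfun \<beta> u" using False by (auto simp: Kfun_def algebra_simps)
    moreover have "u * (v - a) \<le> 2 * (v - a)" using False v by (intro mult_right_mono_neg) auto
    moreover have "u * (v - a) = u * v - u * a" by (simp add: algebra_simps)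
    ultimately show ?thesis using ap by (simp add: mult.commute)
  qed
qed

lemma Kstar_fin: "good a \<beta> \<Longrightarrow> 0 \<le> v \<Longrightarrow> v \<le> a \<Longrightarrow> Kstar \<beta> v < top"
  using Kstar_le[of a \<beta> v] by (simp add: le_less_trans)

lemma invK_meas: "(\<lambda>v. 1 / Kstar \<beta> v) \<in> borel_measurable borel"
proof (rule borel_measurableI_greater)
  fix y :: ennreal
  have "is_interval {x. y < 1 / Kstar \<beta> x}"
    unfolding is_interval_1
  proof (intro ballI allI impI, elim conjE)
    fix p q x :: real assume "p \<in> {x. y < 1 / Kstar \<beta> x}" "q \<in> {x. y < 1 / Kstar \<beta> x}" "p \<le> x" "x \<le> q"
    then show "x \<in> {x. y < 1 / Kstar \<beta> x}"
      using inv_anti[OF Kstar_mono[of x q \<beta>]] by (auto intro: less_le_trans)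
  qed
  then show "{x \<in> space borel. y < 1 / Kstar \<beta> x} \<in> sets borel"
    by (auto intro: real_interval_borel_measurable)
qed

abbreviation piece :: "(real \<Rightarrow> real) \<Rightarrow> real \<Rightarrow> real \<Rightarrow> ennreal" where
  "piece \<beta> x y \<equiv> (\<integral>\<^sup>+ v \<in> {x..<y}. (1 / Kstar \<beta> v) \<partial>lborel)"

lemma F_split:
  assumes "x \<le> y" "y \<le> a"
  shows "Ffun \<beta> a x = piece \<beta> x y + Ffun \<beta> a y"
proof -
  have m: "(\<lambda>v. 1 / Kstar \<beta> v) \<in> borel_measurable lborel" using invK_meas by simp
  have "Ffun \<beta> a x = (\<integral>\<^sup>+ v. (1 / Kstar \<beta> v) * indicator {x..<y} v + (1 / Kstar \<beta> v) * indicator {y..a} v \<partial>lborel)"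
    unfolding Ffun_def
    by (rule nn_integral_cong) (use assms in \<open>auto simp: indicator_def\<close>)
  also have "\<dots> = piece \<beta> x y + Ffun \<beta> a y"
    unfolding Ffun_def using m by (subst nn_integral_add) auto
  finally show ?thesis .
qed

lemma piece_lower:
  assumes "x \<le> y"
  shows "ennreal (y - x) * (1 / Kstar \<beta> y) \<le> piece \<beta> x y"
proof -
  have "(\<integral>\<^sup>+ v. (1 / Kstar \<beta> y) * indicator {x..<y} v \<partial>lborel) \<le> piece \<beta> x y"
    by (intro nn_integral_mono) (auto simp: indicator_def intro!: inv_anti Kstar_mono)
  moreover have "(\<integral>\<^sup>+ v. (1 / Kstar \<beta> y) * indicator {x..<y} v \<partial>lborel) = (1 / Kstar \<beta> y) * ennreal (y - x)"
    using assms by (subst nn_integral_cmult_indicator) auto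
  ultimately show ?thesis by (metis mult.commute)
qed

lemma piece_upper:
  assumes "x \<le> y"
  shows "piece \<beta> x y \<le> ennreal (y - x) * (1 / Kstar \<beta> x)"
proof -
  have "piece \<beta> x y \<le> (\<integral>\<^sup>+ v. (1 / Kstar \<beta> x) * indicator {x..<y} v \<partial>lborel)"
    by (intro nn_integral_mono) (auto simp: indicator_def intro!: inv_anti Kstar_mono)
  moreover have "(\<integral>\<^sup>+ v. (1 / Kstar \<beta> x) * indicator {x..<y} v \<partial>lborel) = (1 / Kstar \<beta> x) * ennreal (y - x)"
    using assms by (subst nn_integral_cmult_indicator) auto
  ultimately show ?thesis by (metis mult.commute)
qed

lemma F_upper:
  assumes "x \<le> a"
  shows "Ffun \<beta> a x \<le> ennreal (a - x) * (1 / Kstar \<beta> x)"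
proof -
  have "Ffun \<beta> a x \<le> (\<integral>\<^sup>+ v. (1 / Kstar \<beta> x) * indicator {x..a} v \<partial>lborel)"
    unfolding Ffun_def
    by (intro nn_integral_mono) (auto simp: indicator_def intro!: inv_anti Kstar_mono)
  moreover have "(\<integral>\<^sup>+ v. (1 / Kstar \<beta> x) * indicator {x..a} v \<partial>lborel) = (1 / Kstar \<beta> x) * ennreal (a - x)"
    using assms by (subst nn_integral_cmult_indicator) auto
  ultimately show ?thesis by (metis mult.commute)
qed

lemma F_a: "Ffun \<beta> a a = 0"
  using F_upper[of a a \<beta>] by simp

lemma invK_fin: "good a \<beta> \<Longrightarrow> 0 < x \<Longrightarrow> 1 / Kstar \<beta> x < top"
  using Kstar_pos[of \<beta> x] unfolding good_def
  by (simp add: divide_ennreal_def less_top[symmetric])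

lemma invK_pos: "good a \<beta> \<Longrightarrow> 0 \<le> x \<Longrightarrow> x \<le> a \<Longrightarrow> 0 < 1 / Kstar \<beta> x"
  using Kstar_fin[of a \<beta> x] 
  by (simp add: ennreal_zero_less_divide)

lemma F_fin: "good a \<beta> \<Longrightarrow> 0 < x \<Longrightarrow> x \<le> a \<Longrightarrow> Ffun \<beta> a x < top"
  using F_upper[of x a \<beta>] invK_fin[of a \<beta> x]
  by (metis ennreal_less_top ennreal_mult_less_top le_less_trans)

lemma F_anti: "x \<le> y \<Longrightarrow> y \<le> a \<Longrightarrow> Ffun \<beta> a y \<le> Ffun \<beta> a x"
  using F_split[of x y a \<beta>] by simp

lemma F_strict:
  assumes g: "good a \<beta>" and xy: "0 < x" "x < y" "y \<le> a"
  shows "Ffun \<beta> a y < Ffun \<beta> a x"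
proof -
  have "0 < ennreal (y - x) * (1 / Kstar \<beta> y)"
    using invK_pos[of a \<beta> y] g xy by (simp add: ennreal_zero_less_mult_iff)
  also have "\<dots> \<le> piece \<beta> x y" using piece_lower xy by simp
  finally have p: "0 < piece \<beta> x y" .
  have f: "Ffun \<beta> a y < top" using F_fin[OF g] xy by simp
  have "Ffun \<beta> a y < piece \<beta> x y + Ffun \<beta> a y"
  proof -
    have "Ffun \<beta> a y + 0 < Ffun \<beta> a y + piece \<beta> x y"
      using p f by (subst ennreal_add_left_cancel_less) auto
    then show ?thesis by (simp add: add.commute)
  qed
  also have "\<dots> = Ffun \<beta> a x" using F_split[of x y a \<beta>] xy by simp
  finally show ?thesis .
qed

lemma F_le_imp:
  assumes g: "good a \<beta>" and x: "0 < x" "x \<le> a" and y: "0 < y" "y \<le> a"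
    and le: "Ffun \<beta> a x \<le> Ffun \<beta> a y"
  shows "y \<le> x"
proof (rule ccontr)
  assume "\<not> y \<le> x"
  then have "Ffun \<beta> a y < Ffun \<beta> a x" using F_strict[OF g x(1) _ y(2)] by simp
  with le show False by simp
qed

lemma F_less_imp:
  assumes g: "good a \<beta>" and x: "0 < x" "x \<le> a" and y: "0 < y" "y \<le> a"
    and le: "Ffun \<beta> a x < Ffun \<beta> a y"
  shows "y < x"
proof (rule ccontr)
  assume "\<not> y < x"
  then have "Ffun \<beta> a y \<le> Ffun \<beta> a x" using F_anti[of x y a \<beta>] y by simp
  with le show False by simp
qed

lemma F_lip:
  assumes g: "good a \<beta>" and xs: "0 < x0" "x0 \<le> x" "x \<le> y" "y \<le> a"
  shows "enn2real (Ffun \<beta> a x) - enn2real (Ffun \<beta> a y) \<le> (y - x) * enn2real (1 / Kstar \<beta> x0)"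
    "0 \<le> enn2real (Ffun \<beta> a x) - enn2real (Ffun \<beta> a y)"
proof -
  have c: "1 / Kstar \<beta> x0 = ennreal (enn2real (1 / Kstar \<beta> x0))"
    using invK_fin[OF g xs(1)] by (simp add: ennreal_enn2real)
  have "piece \<beta> x y \<le> ennreal (y - x) * (1 / Kstar \<beta> x)" using piece_upper xs by simp
  also have "\<dots> \<le> ennreal (y - x) * (1 / Kstar \<beta> x0)"
    by (intro mult_left_mono inv_anti Kstar_mono) (use xs in auto)
  also have "\<dots> = ennreal ((y - x) * enn2real (1 / Kstar \<beta> x0))"
    by (subst c) (use xs in \<open>simp add: ennreal_mult\<close>)
  finally have p: "piece \<beta> x y \<le> ennreal ((y - x) * enn2real (1 / Kstar \<beta> x0))" .
  then have pf: "piece \<beta> x y < top" using le_less_trans by fastforce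
  have ff: "Ffun \<beta> a y < top" using F_fin[OF g] xs by simp
  have "enn2real (Ffun \<beta> a x) = enn2real (piece \<beta> x y) + enn2real (Ffun \<beta> a y)"
    using F_split[of x y a \<beta>] xs pf ff by (simp add: enn2real_plus)
  moreover have "enn2real (piece \<beta> x y) \<le> (y - x) * enn2real (1 / Kstar \<beta> x0)"
    using enn2real_mono[OF p] xs by simp
  ultimately show "enn2real (Ffun \<beta> a x) - enn2real (Ffun \<beta> a y) \<le> (y - x) * enn2real (1 / Kstar \<beta> x0)"
    "0 \<le> enn2real (Ffun \<beta> a x) - enn2real (Ffun \<beta> a y)" by auto
qed

lemma F_cont:
  assumes g: "good a \<beta>" and x0: "0 < x0"
  shows "continuous_on {x0..a} (\<lambda>x. enn2real (Ffun \<beta> a x))"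
proof (rule lipschitz_on_continuous_on)
  show "lipschitz_on (enn2real (1 / Kstar \<beta> x0)) {x0..a} (\<lambda>x. enn2real (Ffun \<beta> a x))"
  proof (rule lipschitz_onI)
    fix x y assume xy: "x \<in> {x0..a}" "y \<in> {x0..a}"
    show "dist (enn2real (Ffun \<beta> a x)) (enn2real (Ffun \<beta> a y)) \<le> enn2real (1 / Kstar \<beta> x0) * dist x y"
    proof (cases "x \<le> y")
      case True
      then show ?thesis using F_lip[OF g x0, of x y] xy by (auto simp: dist_real_def mult.commute)
    next
      case False
      then show ?thesis using F_lip[OF g x0, of y x] xy by (auto simp: dist_real_def mult.commute)
    qed
  qed simp
qed

lemma F_unbounded:
  assumes g: "good a \<beta>"
  shows "ennreal (real k / 4) \<le> Ffun \<beta> a (a / 2 ^ k)"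
proof (induction k)
  case 0
  then show ?case by simp
next
  case (Suc k)
  have ap: "a > 0" using g by (simp add: good_def)
  define x where "x = a / 2 ^ Suc k"
  have x: "0 < x" "2 * x = a / 2 ^ k" "2 * x \<le> a" using ap
    by (auto simp: x_def field_simps)
  have "Kstar \<beta> (2 * x) \<le> ennreal (2 * (2 * x))" using Kstar_le[OF g, of "2*x"] x by simp
  then have "1 / ennreal (4 * x) \<le> 1 / Kstar \<beta> (2 * x)" by (intro inv_anti) simp
  then have "ennreal x * (1 / ennreal (4 * x)) \<le> ennreal x * (1 / Kstar \<beta> (2 * x))"
    by (rule mult_left_mono) simp
  moreover have "ennreal x * (1 / ennreal (4 * x)) = ennreal (1/4)"
    using x divide_ennreal[of 1 "4*x"] by (simp flip: ennreal_1 ennreal_mult)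
  moreover have "ennreal (2 * x - x) * (1 / Kstar \<beta> (2 * x)) \<le> piece \<beta> x (2 * x)"
    using piece_lower[of x "2*x"] x by simp
  ultimately have p: "ennreal (1/4) \<le> piece \<beta> x (2 * x)" by simp
  have "ennreal (real (Suc k) / 4) = ennreal (1/4) + ennreal (real k / 4)"
    by (simp add: ennreal_plus[symmetric] field_simps del: ennreal_plus)
  also have "\<dots> \<le> piece \<beta> x (2 * x) + Ffun \<beta> a (2 * x)"
    using p Suc.IH x by (intro add_mono) auto
  also have "\<dots> = Ffun \<beta> a x" using F_split[of x "2*x" a \<beta>] x by simp
  finally show ?case by (simp add: x_def)
qed

lemma F_big:
  assumes g: "good a \<beta>" and t: "0 \<le> t"
  obtains x0 where "0 < x0" "x0 \<le> a" "ennreal t \<le> Ffun \<beta> a x0"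
proof -
  have ap: "a > 0" using g by (simp add: good_def)
  define k where "k = nat \<lceil>4 * t\<rceil>"
  have "t \<le> real k / 4" unfolding k_def by linarith
  then have "ennreal t \<le> Ffun \<beta> a (a / 2 ^ k)"
    using F_unbounded[OF g, of k] by (meson ennreal_leI order_trans)
  moreover have "0 < a / 2 ^ k" "a / 2 ^ k \<le> a" using ap
    by (auto simp: field_simps)
  ultimately show ?thesis using that by blast
qed

lemma Finv_prop:
  assumes g: "good a \<beta>" and t: "0 \<le> t"
  shows "0 < Finv \<beta> a t" "Finv \<beta> a t \<le> a" "Ffun \<beta> a (Finv \<beta> a t) = ennreal t"
proof -
  have ap: "a > 0" using g by (simp add: good_def)
  obtain x0 where x0: "0 < x0" "x0 \<le> a" "ennreal t \<le> Ffun \<beta> a x0" using F_big[OF g t] by blast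
  have "t \<le> enn2real (Ffun \<beta> a x0)"
    using enn2real_mono[OF x0(3) F_fin[OF g x0(1,2)]] t by simp
  moreover have "enn2real (Ffun \<beta> a a) \<le> t" using t by (simp add: F_a)
  ultimately obtain x where x: "x0 \<le> x" "x \<le> a" "enn2real (Ffun \<beta> a x) = t"
    using IVT2'[of "\<lambda>x. enn2real (Ffun \<beta> a x)" a t x0, OF _ _ x0(2) F_cont[OF g x0(1)]] by blast
  have "Ffun \<beta> a x = ennreal t"
    using x F_fin[OF g, of x] x0 by (metis ennreal_enn2real less_le_trans)
  then have ex: "\<exists>x. x \<in> {0<..a} \<and> Ffun \<beta> a x = ennreal t" using x x0
    by (intro exI[of _ x]) auto
  have un: "y = z" if "y \<in> {0<..a} \<and> Ffun \<beta> a y = ennreal t" "z \<in> {0<..a} \<and> Ffun \<beta> a z = ennreal t" for y z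
    using F_le_imp[OF g, of y z] F_le_imp[OF g, of z y] that by auto
  have "Finv \<beta> a t \<in> {0<..a} \<and> Ffun \<beta> a (Finv \<beta> a t) = ennreal t"
  proof -
    from ex obtain x1 where x1: "x1 \<in> {0<..a} \<and> Ffun \<beta> a x1 = ennreal t" by blast
    show ?thesis unfolding Finv_def by (rule theI[of _ x1]) (use x1 un in blast)+
  qed
  then show "0 < Finv \<beta> a t" "Finv \<beta> a t \<le> a" "Ffun \<beta> a (Finv \<beta> a t) = ennreal t" by auto
qed

lemma Kstar_conv:
  fixes \<beta>1 :: "real \<Rightarrow> real" and \<beta>2 :: "real \<Rightarrow> real \<Rightarrow> real"
  assumes le: "\<And>\<iota> s. \<iota> > 0 \<Longrightarrow> s > 0 \<Longrightarrow> \<beta>1 s \<le> \<beta>2 \<iota> s"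
    and lim: "\<And>s. s > 0 \<Longrightarrow> ((\<lambda>\<iota>. \<beta>2 \<iota> s) \<longlongrightarrow> \<beta>1 s) (at_right 0)"
  shows "((\<lambda>\<iota>. Kstar (\<beta>2 \<iota>) v) \<longlongrightarrow> Kstar \<beta>1 v) (at_right 0)"
proof (rule order_tendstoI)
  fix c assume c: "Kstar \<beta>1 v < c"
  have "\<forall>\<^sub>F \<iota> in at_right 0. (0::real) < \<iota>" by (simp add: eventually_at_right_less)
  then show "\<forall>\<^sub>F \<iota> in at_right 0. Kstar (\<beta>2 \<iota>) v < c"
  proof eventually_elim
    case (elim \<iota>)
    then show ?case using Kstar_beta[of \<beta>1 "\<beta>2 \<iota>" v] le c by (meson le_less_trans)
  qed
next
  fix c assume c: "c < Kstar \<beta>1 v"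
  then obtain u where u: "u \<ge> 0" "c < ennreal (u * v - Kfun \<beta>1 u)"
    unfolding Kstar_def by (auto simp: less_SUP_iff)
  have "u \<noteq> 0" using u by (auto simp: Kfun_def)
  with u have up: "u > 0" by simp
  have "((\<lambda>\<iota>. ennreal (u * v - u * \<beta>2 \<iota> (1/u))) \<longlongrightarrow> ennreal (u * v - u * \<beta>1 (1/u))) (at_right 0)"
    using up by (intro tendsto_ennrealI tendsto_intros lim) auto
  moreover have "c < ennreal (u * v - u * \<beta>1 (1/u))" using u up by (simp add: Kfun_def)
  ultimately have "\<forall>\<^sub>F \<iota> in at_right 0. c < ennreal (u * v - u * \<beta>2 \<iota> (1/u))"
    by (rule order_tendstoD(1))
  then show "\<forall>\<^sub>F \<iota> in at_right 0. c < Kstar (\<beta>2 \<iota>) v"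
  proof eventually_elim
    case (elim \<iota>)
    also have "ennreal (u * v - u * \<beta>2 \<iota> (1/u)) \<le> Kstar (\<beta>2 \<iota>) v"
      unfolding Kstar_def using up by (intro SUP_upper2[of u]) (auto simp: Kfun_def)
    finally show ?case .
  qed
qed

lemma F_conv:
  fixes \<beta>1 :: "real \<Rightarrow> real" and \<beta>2 :: "real \<Rightarrow> real \<Rightarrow> real"
  assumes g1: "good a \<beta>1"
    and le: "\<And>\<iota> s. \<iota> > 0 \<Longrightarrow> s > 0 \<Longrightarrow> \<beta>1 s \<le> \<beta>2 \<iota> s"
    and lim: "\<And>s. s > 0 \<Longrightarrow> ((\<lambda>\<iota>. \<beta>2 \<iota> s) \<longlongrightarrow> \<beta>1 s) (at_right 0)"
    and x: "0 < x" "x \<le> a"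
  shows "((\<lambda>\<iota>. Ffun (\<beta>2 \<iota>) a x) \<longlongrightarrow> Ffun \<beta>1 a x) (at_right 0)"
proof -
  have K1pos: "0 < Kstar \<beta>1 x" using Kstar_pos g1 x by (auto simp: good_def)
  have K1fin: "Kstar \<beta>1 x < top" using Kstar_fin[OF g1] x by simp
  obtain k where k: "Kstar \<beta>1 x = ennreal k" "k > 0" using K1pos K1fin
    by (cases "Kstar \<beta>1 x") auto
  have "ennreal (k/2) < Kstar \<beta>1 x" using k by (simp add: ennreal_lessI)
  then have "\<forall>\<^sub>F \<iota> in at_right 0. ennreal (k/2) < Kstar (\<beta>2 \<iota>) x"
    using order_tendstoD(1)[OF Kstar_conv[of \<beta>1 \<beta>2 x, OF le lim]] by blast
  then obtain \<delta> where \<delta>: "\<delta> > 0" "\<And>\<iota>. 0 < \<iota> \<Longrightarrow> \<iota> < \<delta> \<Longrightarrow> ennreal (k/2) < Kstar (\<beta>2 \<iota>) x"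
    unfolding eventually_at_right_field by auto
  show ?thesis
  proof (rule tendsto_at_right_sequentially[OF \<delta>(1)])
    fix S :: "nat \<Rightarrow> real" assume S: "\<And>n. 0 < S n" "\<And>n. S n < \<delta>" "S \<longlonglongrightarrow> 0"
    have Sf: "filterlim S (at_right 0) sequentially"
      using S by (intro tendsto_imp_filterlim_at_right) auto
    have m: "(\<lambda>v. 1 / Kstar \<beta> v) \<in> borel_measurable lborel" for \<beta> using invK_meas by simp
    show "(\<lambda>n. Ffun (\<beta>2 (S n)) a x) \<longlonglongrightarrow> Ffun \<beta>1 a x"
      unfolding Ffun_def
    proof (rule nn_integral_dominated_convergence[where w = "\<lambda>v. ennreal (2/k) * indicator {x..a} v"])
      show "(\<lambda>v. 1 / Kstar (\<beta>2 (S n)) v * indicator {x..a} v) \<in> borel_measurable lborel" for n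
        using m by simp
      show "(\<lambda>v. 1 / Kstar \<beta>1 v * indicator {x..a} v) \<in> borel_measurable lborel"
        using m by simp
      show "(\<lambda>v. ennreal (2/k) * indicator {x..a} v) \<in> borel_measurable lborel" by simp
      show "(\<integral>\<^sup>+ v. ennreal (2/k) * indicator {x..a} v \<partial>lborel) < \<infinity>"
        using x by (simp add: nn_integral_cmult_indicator ennreal_mult_less_top)
      show "AE v in lborel. 1 / Kstar (\<beta>2 (S n)) v * indicator {x..a} v \<le> ennreal (2/k) * indicator {x..a} v" for n
      proof (rule AE_I2)
        fix v
        show "1 / Kstar (\<beta>2 (S n)) v * indicator {x..a} v \<le> ennreal (2/k) * indicator {x..a} v"
        proof (cases "v \<in> {x..a}")
          case True
          have "1 / Kstar (\<beta>2 (S n)) v \<le> 1 / Kstar (\<beta>2 (S n)) x"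
            using True by (intro inv_anti Kstar_mono) auto
          also have "\<dots> \<le> 1 / ennreal (k/2)"
            using \<delta>(2)[OF S(1) S(2), of n] by (intro inv_anti) simp
          also have "\<dots> = ennreal (2/k)" using k divide_ennreal[of 1 "k/2"]
            by (simp flip: ennreal_1)
          finally show ?thesis using True by simp
        qed simp
      qed
      show "AE v in lborel. (\<lambda>n. 1 / Kstar (\<beta>2 (S n)) v * indicator {x..a} v) \<longlonglongrightarrow> 1 / Kstar \<beta>1 v * indicator {x..a} v"
      proof (rule AE_I2)
        fix v
        have Kc: "(\<lambda>n. Kstar (\<beta>2 (S n)) v) \<longlonglongrightarrow> Kstar \<beta>1 v"
          by (rule filterlim_compose[OF Kstar_conv[of \<beta>1 \<beta>2 v, OF le lim] Sf])
        then have "(\<lambda>n. inverse (Kstar (\<beta>2 (S n)) v)) \<longlonglongrightarrow> inverse (Kstar \<beta>1 v)"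
          using continuous_on_tendsto_compose[OF continuous_on_inverse_ennreal[OF continuous_on_id[of UNIV]] Kc]
          by simp
        then show "(\<lambda>n. 1 / Kstar (\<beta>2 (S n)) v * indicator {x..a} v) \<longlonglongrightarrow> 1 / Kstar \<beta>1 v * indicator {x..a} v"
          by (cases "v \<in> {x..a}") (auto simp: divide_ennreal_def)
      qed
    qed
  qed
qed

lemma F_beta_mono: "(\<And>s. s > 0 \<Longrightarrow> \<beta> s \<le> \<beta>' s) \<Longrightarrow> Ffun \<beta> a x \<le> Ffun \<beta>' a x"
  unfolding Ffun_def
  by (intro nn_integral_mono mult_right_mono inv_anti Kstar_beta) auto

lemma Finv_mono_beta:
  assumes g1: "good a \<beta>" and g2: "good a \<beta>'" and le: "\<And>s. s > 0 \<Longrightarrow> \<beta> s \<le> \<beta>' s" and t: "0 \<le> t"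
  shows "Finv \<beta> a t \<le> Finv \<beta>' a t"
proof -
  note p1 = Finv_prop[OF g1 t] and p2 = Finv_prop[OF g2 t]
  have "Ffun \<beta>' a (Finv \<beta>' a t) \<le> Ffun \<beta>' a (Finv \<beta> a t)"
    using F_beta_mono[of \<beta> \<beta>' a "Finv \<beta> a t", OF le] p1 p2 by simp
  then show ?thesis using F_le_imp[OF g2] p1 p2 by blast
qed

lemma Finv_anti:
  assumes g: "good a \<beta>" and t: "0 \<le> t" "t \<le> t'"
  shows "Finv \<beta> a t' \<le> Finv \<beta> a t"
proof -
  note p1 = Finv_prop[OF g t(1)] and p2 = Finv_prop[of a \<beta> t'] 
  have "Ffun \<beta> a (Finv \<beta> a t) \<le> Ffun \<beta> a (Finv \<beta> a t')"
    using p1 p2 g t by (simp add: ennreal_leI)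
  then show ?thesis using F_le_imp[OF g] p1 p2 g t by (meson order_trans)
qed

lemma Finv_conv:
  fixes \<beta>1 :: "real \<Rightarrow> real" and \<beta>2 :: "real \<Rightarrow> real \<Rightarrow> real"
  assumes g1: "good a \<beta>1" and g2: "\<And>\<iota>. \<iota> > 0 \<Longrightarrow> good a (\<beta>2 \<iota>)"
    and le: "\<And>\<iota> s. \<iota> > 0 \<Longrightarrow> s > 0 \<Longrightarrow> \<beta>1 s \<le> \<beta>2 \<iota> s"
    and lim: "\<And>s. s > 0 \<Longrightarrow> ((\<lambda>\<iota>. \<beta>2 \<iota> s) \<longlongrightarrow> \<beta>1 s) (at_right 0)"
    and t: "0 \<le> t" and e: "e > 0"
  shows "\<forall>\<^sub>F \<iota> in at_right 0. Finv (\<beta>2 \<iota>) a t < Finv \<beta>1 a t + e"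
proof -
  note p1 = Finv_prop[OF g1 t]
  have pos: "\<forall>\<^sub>F \<iota> in at_right 0. (0::real) < \<iota>" by (simp add: eventually_at_right_less)
  show ?thesis
  proof (cases "a < Finv \<beta>1 a t + e")
    case True
    from pos show ?thesis
    proof eventually_elim
      case (elim \<iota>)
      then show ?case using Finv_prop[OF g2[OF elim] t] True by linarith
    qed
  next
    case False
    define x' where "x' = Finv \<beta>1 a t + e"
    have x': "0 < x'" "x' \<le> a" "Finv \<beta>1 a t < x'" using False p1 e by (auto simp: x'_def)
    have "Ffun \<beta>1 a x' < ennreal t" using F_strict[OF g1 p1(1) x'(3) x'(2)] p1 by simp
    then have "\<forall>\<^sub>F \<iota> in at_right 0. Ffun (\<beta>2 \<iota>) a x' < ennreal t"
      using order_tendstoD(2)[OF F_conv[of a \<beta>1 \<beta>2 x', OF g1 le lim x'(1,2)]] by blast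
    with pos show ?thesis
    proof eventually_elim
      case (elim \<iota>)
      note p2 = Finv_prop[OF g2[OF elim(1)] t]
      have "Finv (\<beta>2 \<iota>) a t < x'"
        using F_less_imp[OF g2[OF elim(1)] x'(1,2) p2(1,2)] elim p2 by simp
      then show ?case by (simp add: x'_def)
    qed
  qed
qed

theorem proposition41:
  fixes M :: "'a measure"
    and P1 :: "'a \<Rightarrow> 'a measure"
    and P2 :: "real \<Rightarrow> 'a \<Rightarrow> 'a measure"
    and \<Phi> :: "('a \<Rightarrow> real) \<Rightarrow> ennreal"
    and a :: real
    and \<beta>1 :: "real \<Rightarrow> real"
    and \<beta>2 :: "real \<Rightarrow> real \<Rightarrow> real"
  assumes prob: "prob_space M"
    and P1_kernel: "invariant_markov_kernel M P1"
    and P2_kernel: "\<And>\<iota>. \<iota> > 0 \<Longrightarrow> invariant_markov_kernel M (P2 \<iota>)"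
    and Phi_ae: "\<And>f g. f \<in> L2 M \<Longrightarrow> g \<in> L2 M \<Longrightarrow> (AE x in M. f x = g x) \<Longrightarrow> \<Phi> f = \<Phi> g"
    and a_pos: "0 < a"
    and a_def: "(SUP f\<in>{f \<in> L20 M. \<not> (AE x in M. f x = 0)}. ennreal (sqnorm M f) / \<Phi> f) = ennreal a"
    and Phi_hom: "\<And>c f. f \<in> L2 M \<Longrightarrow> \<Phi> (\<lambda>x. c * f x) = ennreal (c\<^sup>2) * \<Phi> f"
    and Phi_var: "\<And>f. f \<in> L2 M \<Longrightarrow>
        ennreal (sqnorm M (\<lambda>x. f x - (\<integral>y. f y \<partial>M)))
          \<le> ennreal a * \<Phi> (\<lambda>x. f x - (\<integral>y. f y \<partial>M))"
    and Phi_nonexp1: "\<And>n f. f \<in> L2 M \<Longrightarrow> \<Phi> ((kapply P1 ^^ n) f) \<le> \<Phi> f"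
    and Phi_nonexp2: "\<And>\<iota> n f. \<iota> > 0 \<Longrightarrow> f \<in> L2 M \<Longrightarrow> \<Phi> ((kapply (P2 \<iota>) ^^ n) f) \<le> \<Phi> f"
    and beta1_adm: "admissible_beta \<beta>1"
    and beta2_adm: "\<And>\<iota>. \<iota> > 0 \<Longrightarrow> admissible_beta (\<beta>2 \<iota>)"
    and SPI1: "super_poincare M P1 \<beta>1 \<Phi>"
    and SPI2: "\<And>\<iota>. \<iota> > 0 \<Longrightarrow> super_poincare M (P2 \<iota>) (\<beta>2 \<iota>) \<Phi>"
    and beta_le: "\<And>\<iota> s. \<iota> > 0 \<Longrightarrow> s > 0 \<Longrightarrow> \<beta>1 s \<le> \<beta>2 \<iota> s"
    and beta_lim: "\<And>s. s > 0 \<Longrightarrow> ((\<lambda>\<iota>. \<beta>2 \<iota> s) \<longlongrightarrow> \<beta>1 s) (at_right 0)"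
  shows "(\<forall>\<iota>>0. \<forall>n::nat. Finv (\<beta>2 \<iota>) a (real n) \<ge> Finv \<beta>1 a (real n))
    \<and> ((\<lambda>\<iota>. SUP n::nat. Finv (\<beta>2 \<iota>) a (real n) - Finv \<beta>1 a (real n)) \<longlongrightarrow> 0) (at_right 0)"
proof -
  have adm1: "\<And>s. s > 0 \<Longrightarrow> \<beta>1 s \<ge> 0" using beta1_adm by (simp add: admissible_beta_def)
  have lb: "(1 - s) * a \<le> \<beta>1 s" if s: "0 < s" "s < 1" for s
  proof -
    have "ennreal a \<le> ennreal (\<beta>1 s / (1 - s))"
      unfolding a_def[symmetric]
    proof (rule SUP_least)
      fix f assume "f \<in> {f \<in> L20 M. \<not> (AE x in M. f x = 0)}"
      then have f: "f \<in> L20 M" by simp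
      define q where "q = sqnorm M f"
      have q0: "q \<ge> 0" unfolding q_def sqnorm_def by simp
      have "dirichlet_PstarP M P1 f \<le> q"
        unfolding dirichlet_PstarP_def q_def by (simp add: sqnorm_def)
      then have "ennreal (s * dirichlet_PstarP M P1 f) \<le> ennreal (s * q)"
        using s by (intro ennreal_leI mult_left_mono) auto
      moreover have "ennreal q \<le> ennreal (s * dirichlet_PstarP M P1 f) + ennreal (\<beta>1 s) * \<Phi> f"
        using SPI1 s f unfolding super_poincare_def q_def by blast
      ultimately have ineq: "ennreal q \<le> ennreal (s * q) + ennreal (\<beta>1 s) * \<Phi> f"
        by (meson add_right_mono order_trans)
      show "ennreal (sqnorm M f) / \<Phi> f \<le> ennreal (\<beta>1 s / (1 - s))"
      proof (cases "\<Phi> f")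
        case (real p)
        have "ennreal q \<le> ennreal (s * q + \<beta>1 s * p)"
          using ineq real q0 s adm1[OF s(1)] by (simp add: ennreal_mult ennreal_plus)
        then have qi: "q \<le> s * q + \<beta>1 s * p"
          using q0 s adm1[OF s(1)] real by (subst (asm) ennreal_le_iff) auto
        show ?thesis
        proof (cases "p = 0")
          case True
          then have "q * (1 - s) \<le> 0" using qi by (simp add: algebra_simps)
          then have "q \<le> 0" using s by (simp add: mult_le_0_iff)
          then have "q = 0" using q0 by simp
          then show ?thesis using q_def by simp
        next
          case False
          then have pp: "p > 0" using real by simp
          have "q / p \<le> \<beta>1 s / (1 - s)"
            using qi pp s by (simp add: field_simps)
          then show ?thesis using real pp q0 by (simp add: divide_ennreal ennreal_leI flip: q_def)
        qed
      qed simp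
    qed
    then have "a \<le> \<beta>1 s / (1 - s)" using adm1[OF s(1)] s by (subst (asm) ennreal_le_iff) auto
    then show ?thesis using s by (simp add: field_simps)
  qed
  have g1: "good a \<beta>1" using a_pos beta1_adm lb by (simp add: good_def)
  have g2: "good a (\<beta>2 \<iota>)" if "\<iota> > 0" for \<iota>
  proof (unfold good_def, intro conjI allI impI a_pos beta2_adm[OF that])
    fix s :: real assume "0 < s" "s < 1"
    then show "(1 - s) * a \<le> \<beta>2 \<iota> s" using lb[of s] beta_le[OF that, of s] by linarith
  qed
  have part1: "\<forall>\<iota>>0. \<forall>n::nat. Finv (\<beta>2 \<iota>) a (real n) \<ge> Finv \<beta>1 a (real n)"
  proof (intro allI impI)
    fix \<iota> :: real and n :: nat assume i: "\<iota> > 0"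
    show "Finv (\<beta>2 \<iota>) a (real n) \<ge> Finv \<beta>1 a (real n)"
      using Finv_mono_beta[OF g1 g2[OF i] beta_le[OF i]] by simp
  qed
  define D where "D \<iota> = (SUP n::nat. Finv (\<beta>2 \<iota>) a (real n) - Finv \<beta>1 a (real n))" for \<iota>
  have bdd: "bdd_above (range (\<lambda>n::nat. Finv (\<beta>2 \<iota>) a (real n) - Finv \<beta>1 a (real n)))" if "\<iota> > 0" for \<iota>
  proof (rule bdd_aboveI2)
    fix n :: nat
    show "Finv (\<beta>2 \<iota>) a (real n) - Finv \<beta>1 a (real n) \<le> a"
      using Finv_prop[OF g2[OF that], of n] Finv_prop[OF g1, of n] by simp
  qed
  have pos: "\<forall>\<^sub>F \<iota> in at_right 0. (0::real) < \<iota>" by (simp add: eventually_at_right_less)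
  have "(D \<longlongrightarrow> 0) (at_right 0)"
  proof (rule order_tendstoI)
    fix y :: real assume y: "y < 0"
    from pos show "\<forall>\<^sub>F \<iota> in at_right 0. y < D \<iota>"
    proof eventually_elim
      case (elim \<iota>)
      have "0 \<le> Finv (\<beta>2 \<iota>) a (real 0) - Finv \<beta>1 a (real 0)"
        using part1[rule_format, OF elim, of 0] by linarith
      also have "\<dots> \<le> D \<iota>" unfolding D_def by (rule cSUP_upper[OF _ bdd[OF elim]]) simp
      finally show ?case using y by simp
    qed
  next
    fix \<epsilon> :: real assume \<epsilon>: "0 < \<epsilon>"
    define e where "e = \<epsilon> / 3"
    have e: "e > 0" using \<epsilon> by (simp add: e_def)
    define x0 where "x0 = min e a"
    have x0: "0 < x0" "x0 \<le> a" "x0 \<le> e" using e a_pos by (auto simp: x0_def)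
    define N where "N = nat \<lceil>enn2real (Ffun \<beta>1 a x0)\<rceil>"
    have "Ffun \<beta>1 a x0 = ennreal (enn2real (Ffun \<beta>1 a x0))"
      using F_fin[OF g1 x0(1,2)] by (simp add: ennreal_enn2real)
    also have "\<dots> \<le> ennreal (real N)" unfolding N_def by (intro ennreal_leI) linarith
    also have "\<dots> = Ffun \<beta>1 a (Finv \<beta>1 a (real N))" using Finv_prop[OF g1, of "real N"] by simp
    finally have "Finv \<beta>1 a (real N) \<le> x0"
      using F_le_imp[OF g1 x0(1,2)] Finv_prop[OF g1, of "real N"] by simp
    then have FN: "Finv \<beta>1 a (real N) \<le> e" using x0 by simp
    have "\<forall>\<^sub>F \<iota> in at_right 0. \<forall>n\<in>{..N}. Finv (\<beta>2 \<iota>) a (real n) < Finv \<beta>1 a (real n) + e"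
      by (intro eventually_ball_finite ballI Finv_conv[OF g1 g2 beta_le beta_lim] e) auto
    with pos show "\<forall>\<^sub>F \<iota> in at_right 0. D \<iota> < \<epsilon>"
    proof eventually_elim
      case (elim \<iota>)
      have "Finv (\<beta>2 \<iota>) a (real n) - Finv \<beta>1 a (real n) \<le> 2 * e" for n
      proof (cases "n \<le> N")
        case True
        then have "Finv (\<beta>2 \<iota>) a (real n) < Finv \<beta>1 a (real n) + e" using elim(2) by simp
        then show ?thesis using e by linarith
      next
        case False
        have "Finv (\<beta>2 \<iota>) a (real n) \<le> Finv (\<beta>2 \<iota>) a (real N)"
          using Finv_anti[OF g2[OF elim(1)], of "real N" "real n"] False by simp
        also have "\<dots> < Finv \<beta>1 a (real N) + e" using elim(2) by auto
        finally show ?thesis using FN Finv_prop[OF g1, of "real n"] by simp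
      qed
      then have "D \<iota> \<le> 2 * e" unfolding D_def by (intro cSUP_least) auto
      then show ?case using e by (simp add: e_def)
    qed
  qed
  then show ?thesis using part1 unfolding D_def by blast
qed

end
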